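(* If $m\ge 1$, $t\ge 1$ and $n=m(2^t-1)$, then \[s\text{-}sat(Q_n,Q_m)\le\Big(\frac{m^2}{2}+\frac{m}{2}\Big)2^n.\]
   Context: $Q_n$ is the hypercube on $\{0,1\}^n$ with edges between vertices differing in exactly one coordinate. A copy of $F$ is a subgraph isomorphic to $F$. A graph $G$ is $(Q_n,F)$-semi-saturated if $G\subseteq Q_n$ and adding any edge of $E(Q_n)\setminus E(G)$ increases the number of copies of $F$. $s\text{-}sat(Q_n,F)$ is the minimum number of edges of such a graph. *)

theory Defs
  imports Complex_Main
begin

text \<open>The hypercube Q_n: vertices are the subsets of {0..<n} (characteristic
  vectors of 0/1 strings of length n); two vertices are adjacent iff their
  symmetric difference has exactly one element (differ in exactly one coordinate).\<close>

definition hyp_verts :: "nat \<Rightarrow> nat set set" where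
  "hyp_verts n = Pow {..<n}"

definition hyp_edges :: "nat \<Rightarrow> nat set set set" where
  "hyp_edges n = {{A, B} | A B. A \<in> hyp_verts n \<and> B \<in> hyp_verts n \<and>
                      card ((A - B) \<union> (B - A)) = 1}"

definition copies :: "'a set \<Rightarrow> 'a set set \<Rightarrow> 'b set \<Rightarrow> 'b set set \<Rightarrow> ('b set \<times> 'b set set) set" where
  "copies VF EF V E = {(W, D). W \<subseteq> V \<and> D \<subseteq> E \<and>
      (\<exists>f. bij_betw f VF W \<and> D = (\<lambda>e. f ` e) ` EF)}"

definition semi_saturated :: "nat \<Rightarrow> 'a set \<Rightarrow> 'a set set \<Rightarrow> nat set set set \<Rightarrow> bool" where
  "semi_saturated n VF EF E \<longleftrightarrow> E \<subseteq> hyp_edges n \<and>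
     (\<forall>e \<in> hyp_edges n - E.
        card (copies VF EF (hyp_verts n) (insert e E)) > card (copies VF EF (hyp_verts n) E))"

definition s_sat :: "nat \<Rightarrow> 'a set \<Rightarrow> 'a set set \<Rightarrow> nat" where
  "s_sat n VF EF = Min (card ` {E. semi_saturated n VF EF E})"

end

theory Submission
  imports Defs
begin

abbreviation sd :: "'a set \<Rightarrow> 'a set \<Rightarrow> 'a set" where
  "sd A B \<equiv> (A - B) \<union> (B - A)"

lemma sd_int1: "P \<inter> B = {} \<Longrightarrow> sd A P \<inter> B = A \<inter> B" by blast
lemma sd_int2: "P \<inter> B = {p} \<Longrightarrow> sd A P \<inter> B = sd A {p} \<inter> B" by blast

locale hc =
  fixes m t k n :: nat and g :: "nat \<Rightarrow> nat set"
  assumes m1: "m \<ge> 1" and t1: "t \<ge> 1"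
    and k_def: "k = 2^t - 1" and n_def: "n = m * k"
    and gbij: "bij_betw g {..<k} (Pow {..<t} - {{}})"
begin

lemma k_pos: "k \<ge> 1"
proof -
  have "(2::nat)^t \<ge> 2^1" using t1 by (intro power_increasing) auto
  then show ?thesis using k_def by simp
qed

lemma k_le: "k \<le> 2^t" using k_def by simp

lemma g_range: "p < k \<Longrightarrow> g p \<subseteq> {..<t} \<and> g p \<noteq> {}"
  using gbij unfolding bij_betw_def by auto

definition hinv :: "nat set \<Rightarrow> nat" where
  "hinv S = (SOME p. p < k \<and> g p = S)"

lemma hinv: assumes "S \<subseteq> {..<t}" "S \<noteq> {}" shows "hinv S < k \<and> g (hinv S) = S"
proof -
  have "S \<in> g ` {..<k}" using gbij assms unfolding bij_betw_def by auto
  then have "\<exists>p. p < k \<and> g p = S" by auto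
  then show ?thesis unfolding hinv_def by (rule someI_ex)
qed

definition sig :: "nat \<Rightarrow> nat set \<Rightarrow> nat set" where
  "sig l A = {b. b < t \<and> odd (card {x\<in>A. x div k = l \<and> b \<in> g (x mod k)})}"

lemma sig_sub: "sig l A \<subseteq> {..<t}" unfolding sig_def by auto

lemma sig_local:
  assumes "A \<inter> {x. x div k = l} = B \<inter> {x. x div k = l}"
  shows "sig l A = sig l B"
proof -
  have "{x\<in>A. x div k = l \<and> b \<in> g (x mod k)} = {x\<in>B. x div k = l \<and> b \<in> g (x mod k)}" for b
    using assms by blast
  then show ?thesis unfolding sig_def by simp
qed

lemma sig_other: "c div k \<noteq> l \<Longrightarrow> sig l (sd A {c}) = sig l A"
  by (rule sig_local) auto

lemma parity_flip:
  assumes "finite A" "c div k = l" "b \<in> g (c mod k)"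
  shows "odd (card {x \<in> sd A {c}. x div k = l \<and> b \<in> g (x mod k)})
     \<longleftrightarrow> \<not> odd (card {x\<in>A. x div k = l \<and> b \<in> g (x mod k)})"
proof -
  let ?S = "{x\<in>A. x div k = l \<and> b \<in> g (x mod k)}"
  have fS: "finite ?S" using assms by auto
  show ?thesis
  proof (cases "c \<in> A")
    case True
    have e: "{x \<in> sd A {c}. x div k = l \<and> b \<in> g (x mod k)} = ?S - {c}" using True by blast
    have "c \<in> ?S" using True assms by blast
    then have cs: "card ?S = Suc (card (?S - {c}))" using card_Suc_Diff1[OF fS] by simp
    show ?thesis unfolding e cs by simp
  next
    case False
    have e: "{x \<in> sd A {c}. x div k = l \<and> b \<in> g (x mod k)} = insert c ?S" using False assms by blast
    have "c \<notin> ?S" using False by blast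
    then have cs: "card (insert c ?S) = Suc (card ?S)" using fS by simp
    show ?thesis unfolding e cs by simp
  qed
qed

lemma sig_flip:
  assumes "finite A" "c div k = l"
  shows "sig l (sd A {c}) = sd (sig l A) (g (c mod k))"
proof -
  have ck: "c mod k < k" using k_pos by simp
  have gs: "g (c mod k) \<subseteq> {..<t}" using g_range[OF ck] by simp
  have e: "{x \<in> sd A {c}. x div k = l \<and> b \<in> g (x mod k)} = {x\<in>A. x div k = l \<and> b \<in> g (x mod k)}"
    if "b \<notin> g (c mod k)" for b using that assms by auto
  have "b \<in> sig l (sd A {c}) \<longleftrightarrow> b \<in> sd (sig l A) (g (c mod k))" for b
  proof (cases "b \<in> g (c mod k)")
    case True
    then have "b < t" using gs by auto
    then show ?thesis using parity_flip[OF assms True] True unfolding sig_def by auto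
  next
    case False
    then show ?thesis using e[OF False] unfolding sig_def by auto
  qed
  then show ?thesis by blast
qed


lemma blk_lt: "c < n \<Longrightarrow> c div k < m"
  using n_def by (simp add: less_mult_imp_div_less)

lemma code_lt: assumes "l < m" "p < k" shows "l * k + p < n" "(l*k+p) div k = l" "(l*k+p) mod k = p"
proof -
  have "l * k + p < l * k + k" using assms by simp
  also have "\<dots> = Suc l * k" by simp
  also have "\<dots> \<le> m * k" using assms by (intro mult_le_mono1) simp
  finally show "l * k + p < n" using n_def by simp
  show "(l*k+p) div k = l" "(l*k+p) mod k = p" using assms by auto
qed

definition good :: "nat set \<Rightarrow> nat \<Rightarrow> bool" where
  "good Z c \<longleftrightarrow> (\<exists>l<m. l \<noteq> c div k \<and> sig l Z = {}) \<or> sig (c div k) Z = {}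
      \<or> sig (c div k) (sd Z {c}) = {}"

lemma sd_sd: "sd (sd Z {c}) {c} = Z" by blast

lemma good_sym: "good (sd Z {c}) c = good Z c"
proof -
  have "sig l (sd Z {c}) = sig l Z" if "l \<noteq> c div k" for l using sig_other that by metis
  then show ?thesis unfolding good_def sd_sd by metis
qed

definition G :: "nat set set set" where
  "G = {{Z, sd Z {c}} | Z c. Z \<in> Pow {..<n} \<and> c < n \<and> good Z c}"

lemma edge_in: assumes "Z \<subseteq> {..<n}" "c < n" shows "{Z, sd Z {c}} \<in> hyp_edges n"
proof -
  have e: "(Z - sd Z {c}) \<union> (sd Z {c} - Z) = {c}" by blast
  have "card ((Z - sd Z {c}) \<union> (sd Z {c} - Z)) = 1" unfolding e by simp
  moreover have "sd Z {c} \<subseteq> {..<n}" using assms by auto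
  ultimately show ?thesis using assms unfolding hyp_edges_def hyp_verts_def by blast
qed

lemma G_sub: "G \<subseteq> hyp_edges n"
  unfolding G_def using edge_in by blast

lemma N_bound: assumes "l < m"
  shows "card {A \<in> Pow {..<n}. sig l A = {}} * 2^t \<le> 2^n"
proof -
  let ?X = "{A \<in> Pow {..<n}. sig l A = {}}"
  define mu where "mu = (\<lambda>(A, S). if S = {} then A else sd A {l * k + hinv S})"
  have key: "A \<in> ?X \<Longrightarrow> S \<in> Pow {..<t} \<Longrightarrow> sig l (mu (A,S)) = S \<and> mu (A,S) \<in> Pow {..<n}" for A S
  proof -
    assume A: "A \<in> ?X" and S: "S \<in> Pow {..<t}"
    show ?thesis
    proof (cases "S = {}")
      case True then show ?thesis using A unfolding mu_def by simp
    next
      case False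
      have h: "hinv S < k" "g (hinv S) = S" using hinv[of S] S False by auto
      have fA: "finite A" using A finite_subset by auto
      note cl = code_lt[OF assms h(1)]
      have "sig l (sd A {l * k + hinv S}) = S" using sig_flip[OF fA cl(2)] cl(3) h A by simp
      moreover have "sd A {l * k + hinv S} \<in> Pow {..<n}" using A cl(1) by auto
      ultimately show ?thesis using False unfolding mu_def by simp
    qed
  qed
  have inj: "inj_on mu (?X \<times> Pow {..<t})"
  proof (rule inj_onI)
    fix p q assume p: "p \<in> ?X \<times> Pow {..<t}" and q: "q \<in> ?X \<times> Pow {..<t}" and e: "mu p = mu q"
    obtain A S where pA: "p = (A, S)" by fastforce
    obtain B T where qB: "q = (B, T)" by fastforce
    have "S = T" using key[of A S] key[of B T] p q e pA qB by auto
    show "p = q"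
    proof (cases "S = {}")
      case True then show ?thesis using e \<open>S = T\<close> unfolding pA qB mu_def by simp
    next
      case False
      then have "sd A {l * k + hinv S} = sd B {l * k + hinv S}" using e \<open>S = T\<close> unfolding pA qB mu_def by simp
      then have "A = B" by (metis sd_sd)
      then show ?thesis using pA qB \<open>S = T\<close> by simp
    qed
  qed
  have "mu ` (?X \<times> Pow {..<t}) \<subseteq> Pow {..<n}" using key by auto
  then have "card (?X \<times> Pow {..<t}) \<le> card (Pow {..<n} :: nat set set)"
    using card_inj_on_le[OF inj] by blast
  then show ?thesis by (simp add: card_cartesian_product card_Pow)
qed

lemma good_set_bound: assumes "c < n"
  shows "card {Z \<in> Pow {..<n}. good Z c} * 2^t \<le> (m+1) * 2^n"
proof -
  let ?b = "c div k"
  have bm: "?b < m" using blk_lt assms by simp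
  let ?U = "(\<Union>l<m. {A \<in> Pow {..<n}. sig l A = {}})"
  let ?Y = "{Z \<in> Pow {..<n}. sig ?b (sd Z {c}) = {}}"
  have sub: "{Z \<in> Pow {..<n}. good Z c} \<subseteq> ?U \<union> ?Y" using bm unfolding good_def by blast
  have "card {Z \<in> Pow {..<n}. good Z c} \<le> card (?U \<union> ?Y)"
    by (rule card_mono[OF _ sub]) auto
  also have "\<dots> \<le> card ?U + card ?Y" by (rule card_Un_le)
  also have "card ?U \<le> (\<Sum>l<m. card {A \<in> Pow {..<n}. sig l A = {}})" by (rule card_UN_le) simp
  finally have c1: "card {Z \<in> Pow {..<n}. good Z c} \<le> (\<Sum>l<m. card {A \<in> Pow {..<n}. sig l A = {}}) + card ?Y"
    by simp
  have "card ?Y \<le> card {A \<in> Pow {..<n}. sig ?b A = {}}"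
  proof (rule card_inj_on_le)
    show "inj_on (\<lambda>Z. sd Z {c}) ?Y" by (rule inj_onI) blast
    show "(\<lambda>Z. sd Z {c}) ` ?Y \<subseteq> {A \<in> Pow {..<n}. sig ?b A = {}}" using assms by auto
  qed simp
  then have c2: "card ?Y * 2^t \<le> 2^n" using N_bound[OF bm] by (meson dual_order.trans mult_le_mono1)
  have c3: "(\<Sum>l<m. card {A \<in> Pow {..<n}. sig l A = {}}) * 2^t \<le> m * 2^n"
  proof -
    have "(\<Sum>l<m. card {A \<in> Pow {..<n}. sig l A = {}}) * 2^t = (\<Sum>l<m. card {A \<in> Pow {..<n}. sig l A = {}} * 2^t)"
      by (simp add: sum_distrib_right)
    also have "\<dots> \<le> (\<Sum>l<m. 2^n)" by (rule sum_mono) (use N_bound in auto)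
    finally show ?thesis by simp
  qed
  from c1 have "card {Z \<in> Pow {..<n}. good Z c} * 2^t \<le> ((\<Sum>l<m. card {A \<in> Pow {..<n}. sig l A = {}}) + card ?Y) * 2^t"
    by (rule mult_le_mono1)
  also have "\<dots> \<le> m * 2^n + 2^n" using c2 c3 by (simp add: add_mult_distrib)
  finally show ?thesis by simp
qed

lemma half_bound: assumes "c < n"
  shows "2 * card {Z \<in> Pow {..<n}. c \<notin> Z \<and> good Z c} \<le> card {Z \<in> Pow {..<n}. good Z c}"
proof -
  let ?X0 = "{Z \<in> Pow {..<n}. c \<notin> Z \<and> good Z c}"
  let ?X1 = "{Z \<in> Pow {..<n}. c \<in> Z \<and> good Z c}"
  have "card ?X0 \<le> card ?X1"
  proof (rule card_inj_on_le)
    show "inj_on (insert c) ?X0"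
    proof (rule inj_onI)
      fix Z Z' assume "Z \<in> ?X0" "Z' \<in> ?X0" "insert c Z = insert c Z'"
      then have "c \<notin> Z" "c \<notin> Z'" "insert c Z = insert c Z'" by auto
      then show "Z = Z'" by (metis Diff_insert_absorb)
    qed
    show "insert c ` ?X0 \<subseteq> ?X1"
    proof
      fix W assume "W \<in> insert c ` ?X0"
      then obtain Z where Z: "Z \<in> ?X0" "W = insert c Z" by blast
      have W: "W = sd Z {c}" using Z by blast
      have "good W c" using Z(1) good_sym[of Z c] unfolding W by simp
      then show "W \<in> ?X1" using Z assms by auto
    qed
  qed simp
  moreover have "card ?X0 + card ?X1 = card (?X0 \<union> ?X1)"
  proof (rule card_Un_disjoint[symmetric])
    show "finite ?X0" "finite ?X1" by simp_all
    show "?X0 \<inter> ?X1 = {}" by blast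
  qed
  moreover have "card (?X0 \<union> ?X1) \<le> card {Z \<in> Pow {..<n}. good Z c}"
    by (rule card_mono) (simp, blast)
  ultimately show ?thesis by simp
qed

lemma G_cover: "G \<subseteq> (\<Union>c<n. (\<lambda>Z. {Z, insert c Z}) ` {Z \<in> Pow {..<n}. c \<notin> Z \<and> good Z c})"
proof
  fix e assume "e \<in> G"
  then obtain Z c where e: "e = {Z, sd Z {c}}" "Z \<in> Pow {..<n}" "c < n" "good Z c"
    unfolding G_def by blast
  have "\<exists>Y. Y \<in> Pow {..<n} \<and> c \<notin> Y \<and> good Y c \<and> e = {Y, insert c Y}"
  proof (cases "c \<in> Z")
    case False
    have "sd Z {c} = insert c Z" using False by blast
    then have "e = {Z, insert c Z}" using e(1) by simp
    then show ?thesis using e(2,4) False by blast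
  next
    case True
    let ?Z = "Z - {c}"
    have z: "sd Z {c} = ?Z" using True by blast
    have "good ?Z c" using good_sym[of Z c] e(4) unfolding z by simp
    moreover have "e = {?Z, insert c ?Z}" using e(1) insert_Diff[OF True] unfolding z by (simp add: insert_commute)
    moreover have "?Z \<in> Pow {..<n}" using e(2) by blast
    ultimately show ?thesis by blast
  qed
  then obtain Y where "Y \<in> Pow {..<n}" "c \<notin> Y" "good Y c" "e = {Y, insert c Y}" by blast
  then show "e \<in> (\<Union>c<n. (\<lambda>Z. {Z, insert c Z}) ` {Z \<in> Pow {..<n}. c \<notin> Z \<and> good Z c})"
    using e(3) by blast
qed

lemma card_G: "2 * card G \<le> m * (m+1) * 2^n"
proof -
  let ?X0 = "\<lambda>c. {Z \<in> Pow {..<n}. c \<notin> Z \<and> good Z c}"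
  have "card G \<le> card (\<Union>c<n. (\<lambda>Z. {Z, insert c Z}) ` ?X0 c)"
    by (rule card_mono[OF _ G_cover]) auto
  also have "\<dots> \<le> (\<Sum>c<n. card ((\<lambda>Z. {Z, insert c Z}) ` ?X0 c))" by (rule card_UN_le) simp
  also have "\<dots> \<le> (\<Sum>c<n. card (?X0 c))" by (rule sum_mono) (rule card_image_le, simp)
  finally have "2 * card G * 2^t \<le> 2 * (\<Sum>c<n. card (?X0 c)) * 2^t" by simp
  also have "\<dots> = (\<Sum>c<n. 2 * card (?X0 c) * 2^t)" by (simp add: sum_distrib_left sum_distrib_right mult.assoc)
  also have "\<dots> \<le> (\<Sum>c<n. (m+1) * 2^n)"
  proof (rule sum_mono)
    fix c assume "c \<in> {..<n}"
    then have c: "c < n" by simp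
    have "2 * card (?X0 c) * 2^t \<le> card {Z \<in> Pow {..<n}. good Z c} * 2^t"
      using half_bound[OF c] by (rule mult_le_mono1)
    also have "\<dots> \<le> (m+1) * 2^n" by (rule good_set_bound[OF c])
    finally show "2 * card (?X0 c) * 2^t \<le> (m+1) * 2^n" .
  qed
  also have "\<dots> = m * k * ((m+1) * 2^n)" using n_def by simp
  also have "\<dots> \<le> m * 2^t * ((m+1) * 2^n)" using k_le by simp
  finally have f: "2 * card G * 2^t \<le> m * 2^t * ((m+1) * 2^n)" .
  have eq: "m * 2^t * ((m+1) * 2^n) = (m * (m+1) * 2^n) * 2^t" by (simp add: algebra_simps)
  have "2 * card G * 2^t \<le> (m * (m+1) * 2^n) * 2^t" using f unfolding eq .
  then show ?thesis using mult_le_cancel2[of "2 * card G" "2^t" "m * (m+1) * 2^n"] by simp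
qed


lemma finite_edges: "finite (hyp_edges n)"
proof (rule finite_subset)
  show "hyp_edges n \<subseteq> Pow (hyp_verts n)" unfolding hyp_edges_def by blast
  show "finite (Pow (hyp_verts n))" unfolding hyp_verts_def by simp
qed

lemma copies_finite: "E \<subseteq> hyp_edges n \<Longrightarrow> finite (copies VF EF (hyp_verts n) E)"
proof (rule finite_subset)
  show "copies VF EF (hyp_verts n) E \<subseteq> Pow (hyp_verts n) \<times> Pow E" unfolding copies_def by blast
  assume "E \<subseteq> hyp_edges n"
  then have "finite E" using finite_edges finite_subset by blast
  then show "finite (Pow (hyp_verts n) \<times> Pow E)" unfolding hyp_verts_def by simp
qed

lemma sd_image: assumes "inj_on phi M" "X \<subseteq> M" "j \<in> M"
  shows "phi ` sd X {j} = sd (phi ` X) {phi j}"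
proof -
  have "phi ` (X - {j}) = phi ` X - phi ` {j}" using assms by (intro inj_on_image_set_diff) auto
  moreover have "phi ` ({j} - X) = {phi j} - phi ` X" using assms
    by (auto, metis inj_on_eq_iff subsetD)
  ultimately show ?thesis by (simp add: image_Un)
qed

lemma semi: "semi_saturated n (hyp_verts m) (hyp_edges m) G"
  unfolding semi_saturated_def
proof (intro conjI ballI)
  show "G \<subseteq> hyp_edges n" by (rule G_sub)
  fix e assume e: "e \<in> hyp_edges n - G"
  then obtain A B where AB: "e = {A,B}" "A \<subseteq> {..<n}" "B \<subseteq> {..<n}" "card ((A - B) \<union> (B - A)) = 1"
    unfolding hyp_edges_def hyp_verts_def by blast
  then obtain c where c: "(A - B) \<union> (B - A) = {c}" by (meson card_1_singletonE)
  have cn: "c < n" using c AB by blast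
  have Bc: "B = sd A {c}" using c by blast
  have fA: "finite A" using AB(2) finite_subset by blast
  have ng: "\<not> good A c"
  proof
    assume "good A c"
    then have "e \<in> G" unfolding G_def AB(1) Bc using AB(2) cn by blast
    then show False using e by blast
  qed
  define b where "b = c div k"
  have bm: "b < m" using blk_lt cn b_def by simp
  have sne: "sig l A \<noteq> {}" if "l < m" "l \<noteq> b" for l using ng that unfolding good_def b_def by blast
  define phi where "phi j = (if j = b then c else j * k + hinv (sig j A))" for j
  have hj: "hinv (sig j A) < k \<and> g (hinv (sig j A)) = sig j A" if "j < m" "j \<noteq> b" for j
    using hinv[OF sig_sub sne[OF that]] .
  have phi_blk: "phi j div k = j" if "j < m" for j
    using that hj[of j] code_lt[of j] unfolding phi_def b_def by auto
  have phi_n: "phi j < n" if "j < m" for j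
    using that hj[of j] code_lt[of j] cn unfolding phi_def by auto
  have phi_g: "g (phi j mod k) = sig j A" if "j < m" "j \<noteq> b" for j
    using that hj[of j] code_lt[of j] unfolding phi_def by auto
  have phib: "phi b = c" unfolding phi_def by simp
  have inj: "inj_on phi {..<m}"
    by (rule inj_onI) (metis lessThan_iff phi_blk)
  define F where "F X = sd A (phi ` X)" for X
  have F_n: "F X \<subseteq> {..<n}" if "X \<subseteq> {..<m}" for X
    using that AB(2) phi_n unfolding F_def by blast
  have L: "sig l (F Y) = (if l \<in> Y then {} else sig l A)" if "Y \<subseteq> {..<m}" "l < m" "l \<noteq> b" for Y l
  proof -
    have pb: "phi ` Y \<inter> {x. x div k = l} = (if l \<in> Y then {phi l} else {})"
    proof -
      have yy: "\<And>y. y \<in> Y \<Longrightarrow> phi y div k = y" using phi_blk that(1) by blast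
      show ?thesis
      proof (cases "l \<in> Y")
        case True then show ?thesis using yy by auto
      next
        case False then show ?thesis using yy by auto
      qed
    qed
    show ?thesis
    proof (cases "l \<in> Y")
      case True
      have pb': "phi ` Y \<inter> {x. x div k = l} = {phi l}" using pb True by simp
      have "F Y \<inter> {x. x div k = l} = sd A {phi l} \<inter> {x. x div k = l}"
        unfolding F_def by (rule sd_int2[OF pb'])
      then have "sig l (F Y) = sig l (sd A {phi l})" by (rule sig_local)
      also have "\<dots> = sd (sig l A) (g (phi l mod k))" by (rule sig_flip[OF fA phi_blk[OF that(2)]])
      also have "\<dots> = {}" using phi_g[OF that(2,3)] by simp
      finally show ?thesis using True by simp
    next
      case False
      have pb': "phi ` Y \<inter> {x. x div k = l} = {}" using pb False by simp
      have loc: "F Y \<inter> {x. x div k = l} = A \<inter> {x. x div k = l}"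
        unfolding F_def by (rule sd_int1[OF pb'])
      show ?thesis using sig_local[OF loc] False by simp
    qed
  qed
  have F_sd: "F (sd X {j}) = sd (F X) {phi j}" if "X \<subseteq> {..<m}" "j < m" for X j
  proof -
    have "phi ` sd X {j} = sd (phi ` X) {phi j}" using sd_image[OF inj that(1)] that(2) by simp
    then show ?thesis unfolding F_def by blast
  qed
  have inG: "{Z, sd Z {d}} \<in> G" if "Z \<subseteq> {..<n}" "d < n" "good Z d" for Z d
    unfolding G_def using that by blast
  have F0: "F {} = A" unfolding F_def by simp
  have Fb: "F {b} = sd A {c}" unfolding F_def using phib by simp
  have edge: "{F X, sd (F X) {phi j}} \<in> insert e G" if X: "X \<subseteq> {..<m}" and j: "j < m" for X j
  proof (cases "j = b")
    case True
    then have pj: "phi j = c" using phib by simp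
    show ?thesis
    proof (cases "X \<subseteq> {b}")
      case True
      then have "X = {} \<or> X = {b}" by blast
      then have "{F X, sd (F X) {phi j}} = e"
      proof
        assume "X = {}" then show ?thesis unfolding pj AB(1) Bc using F0 by simp
      next
        assume "X = {b}" then show ?thesis unfolding pj AB(1) Bc using Fb sd_sd[of A c] by (simp add: insert_commute)
      qed
      then show ?thesis by simp
    next
      case False
      then obtain l where l: "l \<in> X" "l \<noteq> b" by blast
      have lm: "l < m" using l X by blast
      have "sig l (F X) = {}" using L[OF X lm l(2)] l by simp
      then have "good (F X) c" unfolding good_def using lm l(2) b_def by blast
      then show ?thesis unfolding pj using inG[OF F_n[OF X] cn] by simp
    qed
  next
    case False
    have pd: "phi j div k = j" by (rule phi_blk[OF j])
    show ?thesis
    proof (cases "j \<in> X")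
      case True
      have "sig j (F X) = {}" using L[OF X j False] True by simp
      then have "good (F X) (phi j)" unfolding good_def pd by blast
      then show ?thesis using inG[OF F_n[OF X] phi_n[OF j]] by simp
    next
      case jX: False
      have X': "sd X {j} \<subseteq> {..<m}" using X j by blast
      have "sig j (F (sd X {j})) = {}" using L[OF X' j False] jX by simp
      then have "sig j (sd (F X) {phi j}) = {}" using F_sd[OF X j] by simp
      then have "good (F X) (phi j)" unfolding good_def pd by blast
      then show ?thesis using inG[OF F_n[OF X] phi_n[OF j]] by simp
    qed
  qed
  define W where "W = F ` hyp_verts m"
  define D where "D = (\<lambda>e. F ` e) ` hyp_edges m"
  have injF: "inj_on F (hyp_verts m)"
  proof (rule inj_onI)
    fix X Y assume XY: "X \<in> hyp_verts m" "Y \<in> hyp_verts m" "F X = F Y"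
    then have "phi ` X = phi ` Y" unfolding F_def by blast
    then show "X = Y" using inj XY(1,2) unfolding hyp_verts_def by (simp add: inj_on_image_eq_iff)
  qed
  have Dsub: "D \<subseteq> insert e G"
  proof
    fix d assume "d \<in> D"
    then obtain X Y where XY: "d = F ` {X, Y}" "X \<subseteq> {..<m}" "Y \<subseteq> {..<m}" "card ((X - Y) \<union> (Y - X)) = 1"
      unfolding D_def hyp_edges_def hyp_verts_def by blast
    then obtain j where j: "(X - Y) \<union> (Y - X) = {j}" by (meson card_1_singletonE)
    have jm: "j < m" using j XY by blast
    have Y: "Y = sd X {j}" using j by blast
    have "d = {F X, sd (F X) {phi j}}" using XY(1) F_sd[OF XY(2) jm] unfolding Y by simp
    then show "d \<in> insert e G" using edge[OF XY(2) jm] by simp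
  qed
  have eD: "e \<in> D"
  proof -
    have "{{}, {b}} \<in> hyp_edges m"
    proof -
      have "({} - {b}) \<union> ({b} - {}) = {b}" by blast
      then show ?thesis unfolding hyp_edges_def hyp_verts_def using bm by fastforce
    qed
    moreover have "F ` {{}, {b}} = e" unfolding AB(1) Bc using F0 Fb by simp
    ultimately show ?thesis unfolding D_def by (metis image_eqI)
  qed
  have Wn: "W \<subseteq> hyp_verts n" unfolding W_def hyp_verts_def using F_n by blast
  have bij: "bij_betw F (hyp_verts m) W" unfolding W_def using injF by (simp add: bij_betw_imageI)
  have in1: "(W, D) \<in> copies (hyp_verts m) (hyp_edges m) (hyp_verts n) (insert e G)"
    unfolding copies_def mem_Collect_eq prod.case using Wn Dsub bij D_def by blast
  have in2: "(W, D) \<notin> copies (hyp_verts m) (hyp_edges m) (hyp_verts n) G"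
    unfolding copies_def mem_Collect_eq prod.case using eD e by blast
  have sub: "copies (hyp_verts m) (hyp_edges m) (hyp_verts n) G \<subseteq> copies (hyp_verts m) (hyp_edges m) (hyp_verts n) (insert e G)"
    unfolding copies_def by blast
  have fin: "finite (copies (hyp_verts m) (hyp_edges m) (hyp_verts n) (insert e G))"
    by (rule copies_finite) (use e G_sub in blast)
  show "card (copies (hyp_verts m) (hyp_edges m) (hyp_verts n) G)
      < card (copies (hyp_verts m) (hyp_edges m) (hyp_verts n) (insert e G))"
    by (rule psubset_card_mono[OF fin]) (use sub in1 in2 in blast)
qed


end

lemma hyp_edges_finite: "finite (hyp_edges n)"
proof (rule finite_subset)
  show "hyp_edges n \<subseteq> Pow (hyp_verts n)" unfolding hyp_edges_def by blast
  show "finite (Pow (hyp_verts n))" unfolding hyp_verts_def by simp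
qed

lemma s_sat_le: assumes "semi_saturated n VF EF E" shows "s_sat n VF EF \<le> card E"
proof -
  have "{E. semi_saturated n VF EF E} \<subseteq> Pow (hyp_edges n)" unfolding semi_saturated_def by blast
  then have "finite {E. semi_saturated n VF EF E}" using hyp_edges_finite finite_subset by blast
  then show ?thesis unfolding s_sat_def using assms by (intro Min_le) auto
qed

theorem mainTheorem7:
  fixes m t n :: nat
  assumes "m \<ge> 1" and "t \<ge> 1" and "n = m * (2 ^ t - 1)"
  shows "real (s_sat n (hyp_verts m) (hyp_edges m))
           \<le> (real m ^ 2 / 2 + real m / 2) * 2 ^ n"
proof -
  let ?M = "Pow {..<t} - {{}} :: nat set set"
  have cM: "card ?M = 2^t - 1" by (simp add: card_Pow)
  obtain g where g: "bij_betw g {0..<card ?M} ?M" using ex_bij_betw_nat_finite[of ?M] by auto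
  have g': "bij_betw g {..<2^t - 1} ?M" using g unfolding cM by (simp add: atLeast0LessThan)
  interpret hc m t "2^t - 1" n g
    by unfold_locales (use assms g' in auto)
  have s: "s_sat n (hyp_verts m) (hyp_edges m) \<le> card G" by (rule s_sat_le[OF semi])
  have c: "2 * card G \<le> m * (m+1) * 2^n" by (rule card_G)
  have "real (2 * s_sat n (hyp_verts m) (hyp_edges m)) \<le> real (m * (m+1) * 2^n)"
    using s c by linarith
  then have "2 * real (s_sat n (hyp_verts m) (hyp_edges m)) \<le> real m * (real m + 1) * 2^n" by (simp add: algebra_simps)
  moreover have "(real m ^ 2 / 2 + real m / 2) * 2 ^ n = real m * (real m + 1) * 2^n / 2"
    by (simp add: power2_eq_square field_simps)
  ultimately show ?thesis by linarith
qed

end
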